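(* Let $Q$ be a uniquely $2$-divisible commutative A-loop, and define $x\circ y = \big(x^{-1}\backslash (xy^2)\big)^{1/2}$. Then $(Q,\circ)$ is commutative if and only if $(Q,\circ)$ is isomorphic to $Q$.
   Context: A loop is a set with a binary operation and neutral element $1$ in which all left and right translations are bijections; $\mathrm{Inn}(Q)$ is the stabilizer of $1$ in the group generated by all translations. A commutative A-loop is a commutative loop all of whose inner mappings are automorphisms. $x\backslash y$ is the unique $z$ with $xz=y$, $x^{-1}=x\backslash 1$. Uniquely $2$-divisible means $x\mapsto x^2$ is a bijection; $z^{1/2}$ is the unique $w$ with $w^2=z$. *)

theory Defs
  imports Main
begin

definition loop :: "('a \<Rightarrow> 'a \<Rightarrow> 'a) \<Rightarrow> 'a \<Rightarrow> bool" where
  "loop mult e \<longleftrightarrow> (\<forall>x. mult e x = x \<and> mult x e = x)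
     \<and> (\<forall>x. bij (mult x)) \<and> (\<forall>x. bij (\<lambda>y. mult y x))"

definition ldiv :: "('a \<Rightarrow> 'a \<Rightarrow> 'a) \<Rightarrow> 'a \<Rightarrow> 'a \<Rightarrow> 'a" where
  "ldiv mult x y = (THE z. mult x z = y)"

definition linv :: "('a \<Rightarrow> 'a \<Rightarrow> 'a) \<Rightarrow> 'a \<Rightarrow> 'a \<Rightarrow> 'a" where
  "linv mult e x = ldiv mult x e"

inductive_set Mlt :: "('a \<Rightarrow> 'a \<Rightarrow> 'a) \<Rightarrow> ('a \<Rightarrow> 'a) set" for mult where
  Mlt_id: "id \<in> Mlt mult"
| Mlt_L: "f \<in> Mlt mult \<Longrightarrow> mult x \<circ> f \<in> Mlt mult"
| Mlt_R: "f \<in> Mlt mult \<Longrightarrow> (\<lambda>y. mult y x) \<circ> f \<in> Mlt mult"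
| Mlt_Linv: "f \<in> Mlt mult \<Longrightarrow> inv (mult x) \<circ> f \<in> Mlt mult"
| Mlt_Rinv: "f \<in> Mlt mult \<Longrightarrow> inv (\<lambda>y. mult y x) \<circ> f \<in> Mlt mult"

definition Inn :: "('a \<Rightarrow> 'a \<Rightarrow> 'a) \<Rightarrow> 'a \<Rightarrow> ('a \<Rightarrow> 'a) set" where
  "Inn mult e = {f \<in> Mlt mult. f e = e}"

definition automorphism :: "('a \<Rightarrow> 'a \<Rightarrow> 'a) \<Rightarrow> ('a \<Rightarrow> 'a) \<Rightarrow> bool" where
  "automorphism mult f \<longleftrightarrow> bij f \<and> (\<forall>x y. f (mult x y) = mult (f x) (f y))"

definition comm_A_loop :: "('a \<Rightarrow> 'a \<Rightarrow> 'a) \<Rightarrow> 'a \<Rightarrow> bool" where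
  "comm_A_loop mult e \<longleftrightarrow> loop mult e \<and> (\<forall>x y. mult x y = mult y x)
     \<and> (\<forall>f \<in> Inn mult e. automorphism mult f)"

definition uniquely_2_divisible :: "('a \<Rightarrow> 'a \<Rightarrow> 'a) \<Rightarrow> bool" where
  "uniquely_2_divisible mult \<longleftrightarrow> bij (\<lambda>x. mult x x)"

definition sqrt2 :: "('a \<Rightarrow> 'a \<Rightarrow> 'a) \<Rightarrow> 'a \<Rightarrow> 'a" where
  "sqrt2 mult z = (THE w. mult w w = z)"

definition circ :: "('a \<Rightarrow> 'a \<Rightarrow> 'a) \<Rightarrow> 'a \<Rightarrow> 'a \<Rightarrow> 'a \<Rightarrow> 'a" where
  "circ mult e x y = sqrt2 mult (ldiv mult (linv mult e x) (mult x (mult y y)))"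

definition magma_iso :: "('a \<Rightarrow> 'a \<Rightarrow> 'a) \<Rightarrow> ('b \<Rightarrow> 'b \<Rightarrow> 'b) \<Rightarrow> ('a \<Rightarrow> 'b) \<Rightarrow> bool" where
  "magma_iso m1 m2 f \<longleftrightarrow> bij f \<and> (\<forall>x y. f (m1 x y) = m2 (f x) (f y))"

end

theory Submission
  imports Defs
begin


locale cal =
  fixes mult :: "'a \<Rightarrow> 'a \<Rightarrow> 'a" (infixl "\<cdot>" 70) and e :: 'a
  assumes CA: "comm_A_loop mult e" and U2: "uniquely_2_divisible mult"
begin

abbreviation "dv \<equiv> ldiv mult"
abbreviation "iv x \<equiv> ldiv mult x e"
abbreviation "pp x z \<equiv> ldiv mult (iv x) (x \<cdot> z)"
abbreviation "sq \<equiv> sqrt2 mult"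

lemma lp: "loop mult e" using CA by (simp add: comm_A_loop_def)
lemma cm: "x \<cdot> y = y \<cdot> x" using CA by (simp add: comm_A_loop_def)
lemma lid[simp]: "e \<cdot> x = x" using lp by (simp add: loop_def)
lemma rid[simp]: "x \<cdot> e = x" using lp by (simp add: loop_def)
lemma bijL: "bij (mult x)" using lp by (simp add: loop_def)

lemma canc: assumes "x \<cdot> y = x \<cdot> z" shows "y = z"
proof -
  have "inj (mult x)" using bijL by (rule bij_is_inj)
  then show ?thesis unfolding inj_def using assms by blast
qed
lemma exL: "\<exists>z. x \<cdot> z = y"
  using bijL[of x] unfolding bij_def surj_def by metis

lemma ld1[simp]: "x \<cdot> ldiv mult x y = y"
proof -
  obtain z where z: "x \<cdot> z = y" using exL by blast
  have "ldiv mult x y = z" unfolding ldiv_def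
  proof (rule the_equality)
    show "x \<cdot> z = y" by (rule z)
  next
    fix v assume "x \<cdot> v = y" then show "v = z" using z canc by metis
  qed
  then show ?thesis using z by simp
qed
lemma ld2[simp]: "ldiv mult x (x \<cdot> y) = y"
  using canc ld1 by metis

lemma inv_L: "inv (mult x) = ldiv mult x"
proof
  fix y show "inv (mult x) y = ldiv mult x y"
    by (rule inv_f_eq) (use bijL[of x] in \<open>simp_all add: bij_def\<close>)
qed

lemma sq_bij: "bij (\<lambda>x. x \<cdot> x)" using U2 unfolding uniquely_2_divisible_def .
lemma sqinj: assumes "x \<cdot> x = y \<cdot> y" shows "x = y"
proof -
  have "inj (\<lambda>x. x \<cdot> x)" using sq_bij by (rule bij_is_inj)
  then show ?thesis unfolding inj_def using assms by blast
qed
lemma exsq: "\<exists>z. z \<cdot> z = w"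
  using sq_bij unfolding bij_def surj_def by metis
lemma sr1[simp]: "sqrt2 mult w \<cdot> sqrt2 mult w = w"
proof -
  obtain z where z: "z \<cdot> z = w" using exsq by blast
  have "sqrt2 mult w = z" unfolding sqrt2_def
  proof (rule the_equality)
    show "z \<cdot> z = w" by (rule z)
  next
    fix v assume "v \<cdot> v = w" then show "v = z" using z sqinj by metis
  qed
  then show ?thesis using z by simp
qed
lemma sr2[simp]: "sqrt2 mult (x \<cdot> x) = x"
  using sqinj sr1 by metis

lemma inn_aut: "f \<in> Mlt mult \<Longrightarrow> f e = e \<Longrightarrow> f (x \<cdot> y) = f x \<cdot> f y"
  proof -
  assume a: "f \<in> Mlt mult" "f e = e"
  have "\<forall>f \<in> Inn mult e. automorphism mult f" using CA unfolding comm_A_loop_def by blast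
  moreover have "f \<in> Inn mult e" using a unfolding Inn_def by blast
  ultimately have "automorphism mult f" by blast
  then show ?thesis unfolding automorphism_def by blast
qed

lemma aut_Lxy: "ldiv mult (a \<cdot> b) (a \<cdot> (b \<cdot> (x \<cdot> y))) =
   ldiv mult (a \<cdot> b) (a \<cdot> (b \<cdot> x)) \<cdot> ldiv mult (a \<cdot> b) (a \<cdot> (b \<cdot> y))"
proof -
  let ?f = "inv (mult (a \<cdot> b)) \<circ> (mult a \<circ> (mult b \<circ> id))"
  have "?f \<in> Mlt mult" by (rule Mlt_Linv[OF Mlt_L[OF Mlt_L[OF Mlt_id]]])
  moreover have "?f e = e" unfolding inv_L comp_def id_def using ld2[of "a \<cdot> b" e] by simp
  ultimately have "?f (x \<cdot> y) = ?f x \<cdot> ?f y" by (rule inn_aut)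
  then show ?thesis unfolding inv_L comp_def id_def .
qed
lemma pa1_f13: "(x0 \<cdot> e) = x0"
  by (metis cm lid)

lemma pa1_f25: "(dv x1 (x2 \<cdot> x1)) = x2"
  by (metis ld2 cm)

lemma pa1_f27: "e = (dv x5 x5)"
  by (metis ld2 pa1_f13)

lemma pa1_f66: "(dv (x0 \<cdot> x0) (x0 \<cdot> (x0 \<cdot> (x0 \<cdot> x1)))) = (x0 \<cdot> (dv (x0 \<cdot> x0) (x0 \<cdot> (x0 \<cdot> x1))))"
  by (metis aut_Lxy pa1_f25)

lemma pa1_f137: "(dv (x6 \<cdot> x6) (x6 \<cdot> (x6 \<cdot> x7))) = (x6 \<cdot> (dv (x6 \<cdot> x6) (x6 \<cdot> x7)))"
  by (metis pa1_f66 ld1)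

lemma pa1_f177: "(dv (x5 \<cdot> x5) (x5 \<cdot> x5)) = (x5 \<cdot> (dv (x5 \<cdot> x5) x5))"
  by (metis pa1_f137 pa1_f13)

lemma pa1_f199: "e = (x5 \<cdot> (dv (x5 \<cdot> x5) x5))"
  by (metis pa1_f177 pa1_f27)

lemma pa1_f228: "(dv (x2 \<cdot> x2) x2) = (dv x2 e)"
  by (metis ld2 pa1_f199)

lemma pa1_f247: "((x2 \<cdot> x2) \<cdot> (dv x2 e)) = x2"
  by (metis ld1 pa1_f228)

lemma pa1: "iv x \<cdot> (x \<cdot> x) = x"
  by (metis pa1_f247 cm)

lemma pc_f12: "(x0 \<cdot> e) = x0"
  by (metis cm lid)

lemma pc_f20: "(dv e x0) = x0"
  by (metis ld1 lid)

lemma pc_f24: "(dv x1 (x2 \<cdot> x1)) = x2"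
  by (metis ld2 cm)

lemma pc_f26: "e = (dv x5 x5)"
  by (metis ld2 pc_f12)

lemma pc_f34: "(dv (dv x6 x7) x7) = x6"
  by (metis pc_f24 ld1)

lemma pc_f42: "((dv x0 x1) \<cdot> x0) = x1"
  by (metis ld1 pc_f34)

lemma pc_f58: "(dv (x16 \<cdot> x14) (x16 \<cdot> (x14 \<cdot> ((dv x14 x15) \<cdot> x17)))) = ((dv (x16 \<cdot> x14) (x16 \<cdot> x15)) \<cdot> (dv (x16 \<cdot> x14) (x16 \<cdot> (x14 \<cdot> x17))))"
  by (metis aut_Lxy ld1)

lemma pc_f65: "(dv (x0 \<cdot> x0) (x0 \<cdot> (x0 \<cdot> (x0 \<cdot> x1)))) = (x0 \<cdot> (dv (x0 \<cdot> x0) (x0 \<cdot> (x0 \<cdot> x1))))"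
  by (metis aut_Lxy pc_f24)

lemma pc_f136: "(dv (x6 \<cdot> x6) (x6 \<cdot> (x6 \<cdot> x7))) = (x6 \<cdot> (dv (x6 \<cdot> x6) (x6 \<cdot> x7)))"
  by (metis pc_f65 ld1)

lemma pc_f176: "(dv (x5 \<cdot> x5) (x5 \<cdot> x5)) = (x5 \<cdot> (dv (x5 \<cdot> x5) x5))"
  by (metis pc_f136 pc_f12)

lemma pc_f177: "(dv (x6 \<cdot> x6) (x6 \<cdot> x7)) = (x6 \<cdot> (dv (x6 \<cdot> x6) x7))"
  by (metis pc_f136 ld1)

lemma pc_f198: "e = (x5 \<cdot> (dv (x5 \<cdot> x5) x5))"
  by (metis pc_f176 pc_f26)

lemma pc_f227: "(dv (x2 \<cdot> x2) x2) = (dv x2 e)"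
  by (metis ld2 pc_f198)

lemma pc_f244: "((dv x0 e) \<cdot> (x0 \<cdot> x0)) = x0"
  by (metis pc_f42 pc_f227)

lemma pc_f366: "(dv (x0 \<cdot> x0) (x1 \<cdot> x0)) = (x0 \<cdot> (dv (x0 \<cdot> x0) x1))"
  by (metis pc_f177 cm)

lemma pc_f382: "(x8 \<cdot> x9) = ((x8 \<cdot> (dv (x8 \<cdot> x8) x9)) \<cdot> (x8 \<cdot> x8))"
  by (metis pc_f42 pc_f177)

lemma pc_f384: "(x12 \<cdot> x13) = ((x12 \<cdot> x12) \<cdot> (x12 \<cdot> (dv (x12 \<cdot> x12) x13)))"
  by (metis ld1 pc_f177)

lemma pc_f599: "(x4 \<cdot> x3) = ((x3 \<cdot> (dv (x3 \<cdot> x3) x4)) \<cdot> (x3 \<cdot> x3))"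
  by (metis pc_f42 pc_f366)

lemma pc_f851: "(x6 \<cdot> ((x6 \<cdot> x6) \<cdot> x7)) = ((x6 \<cdot> x7) \<cdot> (x6 \<cdot> x6))"
  by (metis pc_f382 ld2)

lemma pc_f852: "(x8 \<cdot> (x9 \<cdot> (x8 \<cdot> x8))) = ((x8 \<cdot> x9) \<cdot> (x8 \<cdot> x8))"
  by (metis pc_f382 pc_f24)

lemma pc_f1467: "(x6 \<cdot> ((x6 \<cdot> x6) \<cdot> x7)) = (x6 \<cdot> (x7 \<cdot> (x6 \<cdot> x6)))"
  by (metis pc_f852 pc_f851)

lemma pc_f3130: "(x6 \<cdot> (x7 \<cdot> x6)) = (x6 \<cdot> ((x6 \<cdot> x6) \<cdot> (x6 \<cdot> (dv (x6 \<cdot> x6) x7))))"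
  by (metis pc_f1467 pc_f599)

lemma pc_f3211: "(x6 \<cdot> (x6 \<cdot> x7)) = (x6 \<cdot> (x7 \<cdot> x6))"
  by (metis pc_f3130 pc_f384)

lemma pc_f4266: "(dv ((dv x63 e) \<cdot> x63) ((dv x63 e) \<cdot> (x63 \<cdot> ((dv x63 x64) \<cdot> x63)))) = ((dv ((dv x63 e) \<cdot> x63) ((dv x63 e) \<cdot> x64)) \<cdot> (dv ((dv x63 e) \<cdot> x63) x63))"
  by (metis pc_f58 pc_f244)

lemma pc_f4446: "(dv (x63 \<cdot> (dv x63 e)) ((dv x63 e) \<cdot> (x63 \<cdot> ((dv x63 x64) \<cdot> x63)))) = ((dv (x63 \<cdot> (dv x63 e)) ((dv x63 e) \<cdot> x64)) \<cdot> (dv (x63 \<cdot> (dv x63 e)) x63))"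
  by (metis pc_f4266 cm)

lemma pc_f4447: "(dv e ((dv x63 e) \<cdot> (x63 \<cdot> ((dv x63 x64) \<cdot> x63)))) = ((dv e ((dv x63 e) \<cdot> x64)) \<cdot> (dv e x63))"
  by (metis pc_f4446 ld1)

lemma pc_f4448: "(dv e ((dv x63 e) \<cdot> (x63 \<cdot> ((dv x63 x64) \<cdot> x63)))) = ((dv e x63) \<cdot> (dv e ((dv x63 e) \<cdot> x64)))"
  by (metis pc_f4447 cm)

lemma pc_f4449: "(dv e ((dv x63 e) \<cdot> (x63 \<cdot> ((dv x63 x64) \<cdot> x63)))) = ((dv e x63) \<cdot> ((dv x63 e) \<cdot> x64))"
  by (metis pc_f4448 pc_f20)

lemma pc_f4450: "(dv e ((dv x63 e) \<cdot> (x63 \<cdot> ((dv x63 x64) \<cdot> x63)))) = (x63 \<cdot> ((dv x63 e) \<cdot> x64))"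
  by (metis pc_f4449 pc_f20)

lemma pc_f4451: "(x63 \<cdot> ((dv x63 e) \<cdot> x64)) = (dv e ((dv x63 e) \<cdot> (x63 \<cdot> (x63 \<cdot> (dv x63 x64)))))"
  by (metis pc_f4450 pc_f3211)

lemma pc_f4452: "(x63 \<cdot> ((dv x63 e) \<cdot> x64)) = (dv e ((dv x63 e) \<cdot> (x63 \<cdot> x64)))"
  by (metis pc_f4451 ld1)

lemma pc_f17223: "((dv x10 e) \<cdot> (x10 \<cdot> x11)) = (dv e (x10 \<cdot> ((dv x10 e) \<cdot> x11)))"
  by (metis pc_f4452 pc_f34)

lemma pc_f17334: "((dv x10 e) \<cdot> (x10 \<cdot> x11)) = (x10 \<cdot> ((dv x10 e) \<cdot> x11))"
  by (metis pc_f17223 pc_f20)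

lemma pc_f17657: "(x58 \<cdot> x59) = (dv (dv x58 e) (x58 \<cdot> ((dv x58 e) \<cdot> x59)))"
  by (metis ld2 pc_f17334)

lemma pc_f20107: "(x35 \<cdot> (dv (dv x35 e) x36)) = (dv (dv x35 e) (x35 \<cdot> x36))"
  by (metis pc_f17657 ld1)

lemma pc: "x \<cdot> dv (iv x) y = dv (iv x) (x \<cdot> y)"
  by (metis pc_f20107)

lemma aip_f11: "(x0 \<cdot> e) = x0"
  by (metis cm lid)

lemma aip_f15: "e = (x0 \<cdot> (iv x0))"
  by (metis ld1)

lemma aip_f19: "(dv x1 (x2 \<cdot> x1)) = x2"
  by (metis ld2 cm)

lemma aip_f23: "e = (dv x0 x0)"
  by (metis ld2 aip_f11)

lemma aip_f29: "(dv (x13 \<cdot> x11) (x13 \<cdot> (x11 \<cdot> ((dv x11 x12) \<cdot> x14)))) = ((dv (x13 \<cdot> x11) (x13 \<cdot> x12)) \<cdot> (dv (x13 \<cdot> x11) (x13 \<cdot> (x11 \<cdot> x14))))"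
  by (metis aut_Lxy ld1)

lemma aip_f42: "(dv (x5 \<cdot> x3) (x5 \<cdot> (x3 \<cdot> (x6 \<cdot> x4)))) = ((dv (x5 \<cdot> x3) (x5 \<cdot> (x3 \<cdot> x6))) \<cdot> (dv (x5 \<cdot> x3) (x5 \<cdot> (x4 \<cdot> x3))))"
  by (metis aut_Lxy cm)

lemma aip_f50: "((dv (x4 \<cdot> x5) (x4 \<cdot> (x5 \<cdot> x7))) \<cdot> (dv (x4 \<cdot> x5) (x4 \<cdot> (x5 \<cdot> x6)))) = (dv (x4 \<cdot> x5) (x4 \<cdot> (x5 \<cdot> (x6 \<cdot> x7))))"
  by (metis aut_Lxy cm)

lemma aip_f52: "(dv (x0 \<cdot> x1) (x0 \<cdot> (x1 \<cdot> x3))) = (dv (dv (x0 \<cdot> x1) (x0 \<cdot> (x1 \<cdot> x2))) (dv (x0 \<cdot> x1) (x0 \<cdot> (x1 \<cdot> (x2 \<cdot> x3)))))"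
  by (metis ld2 aut_Lxy)

lemma aip_f111: "(dv (dv x6 x7) x7) = x6"
  by (metis aip_f19 ld1)

lemma aip_f112: "(dv (iv x8) e) = x8"
  by (metis aip_f19 aip_f15)

lemma aip_f116: "(dv (x3 \<cdot> x3) (x3 \<cdot> (x3 \<cdot> (x4 \<cdot> x3)))) = ((dv (x3 \<cdot> x3) (x3 \<cdot> (x3 \<cdot> x4))) \<cdot> x3)"
  by (metis aut_Lxy aip_f19)

lemma aip_f119: "(dv (x3 \<cdot> x3) (x3 \<cdot> (x3 \<cdot> (x4 \<cdot> x3)))) = (x3 \<cdot> (dv (x3 \<cdot> x3) (x3 \<cdot> (x3 \<cdot> x4))))"
  by (metis aip_f116 cm)

lemma aip_f211: "(dv (x18 \<cdot> x19) (x18 \<cdot> (x19 \<cdot> ((dv x19 (iv x18)) \<cdot> x20)))) = ((dv (x18 \<cdot> x19) e) \<cdot> (dv (x18 \<cdot> x19) (x18 \<cdot> (x19 \<cdot> x20))))"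
  by (metis aip_f29 aip_f15)

lemma aip_f238: "(dv (x0 \<cdot> x0) (x0 \<cdot> (x0 \<cdot> ((dv x0 x1) \<cdot> x0)))) = ((dv (x0 \<cdot> x0) (x0 \<cdot> x1)) \<cdot> x0)"
  by (metis aip_f29 aip_f19)

lemma aip_f260: "(dv (x18 \<cdot> x19) (x18 \<cdot> (x19 \<cdot> ((dv x19 (iv x18)) \<cdot> x20)))) = ((iv (x18 \<cdot> x19)) \<cdot> (dv (x18 \<cdot> x19) (x18 \<cdot> (x19 \<cdot> x20))))"
  by (metis aip_f211)

lemma aip_f291: "(dv (x0 \<cdot> x0) (x0 \<cdot> (x0 \<cdot> ((dv x0 x1) \<cdot> x0)))) = (x0 \<cdot> (dv (x0 \<cdot> x0) (x0 \<cdot> x1)))"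
  by (metis aip_f238 cm)

lemma aip_f292: "(x0 \<cdot> (dv (x0 \<cdot> x0) (x0 \<cdot> x1))) = (dv (x0 \<cdot> x0) (x0 \<cdot> (x0 \<cdot> (x0 \<cdot> (dv x0 x1)))))"
  by (metis aip_f291 cm)

lemma aip_f293: "(dv (x0 \<cdot> x0) (x0 \<cdot> (x0 \<cdot> x1))) = (x0 \<cdot> (dv (x0 \<cdot> x0) (x0 \<cdot> x1)))"
  by (metis aip_f292 ld1)

lemma aip_f297: "e = ((iv x1) \<cdot> x1)"
  by (metis ld1 aip_f112)

lemma aip_f633: "((dv (x12 \<cdot> x11) (x12 \<cdot> x11)) \<cdot> (dv (x12 \<cdot> x11) (x12 \<cdot> (x13 \<cdot> x11)))) = (dv (x12 \<cdot> x11) (x12 \<cdot> (x11 \<cdot> (e \<cdot> x13))))"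
  by (metis aip_f42 aip_f11)

lemma aip_f707: "((dv (x12 \<cdot> x11) (x12 \<cdot> x11)) \<cdot> (dv (x12 \<cdot> x11) (x12 \<cdot> (x13 \<cdot> x11)))) = (dv (x12 \<cdot> x11) (x12 \<cdot> (x11 \<cdot> x13)))"
  by (metis aip_f633 lid)

lemma aip_f708: "(e \<cdot> (dv (x12 \<cdot> x11) (x12 \<cdot> (x13 \<cdot> x11)))) = (dv (x12 \<cdot> x11) (x12 \<cdot> (x11 \<cdot> x13)))"
  by (metis aip_f707 aip_f23)

lemma aip_f1136: "((dv x4 x5) \<cdot> x4) = x5"
  by (metis ld1 aip_f111)

lemma aip_f1184: "(dv (x19 \<cdot> e) (x19 \<cdot> (e \<cdot> (x18 \<cdot> x20)))) = ((dv (x19 \<cdot> e) (x19 \<cdot> (e \<cdot> x20))) \<cdot> (dv (x19 \<cdot> e) (x19 \<cdot> x18)))"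
  by (metis aip_f50 lid)

lemma aip_f1289: "(dv x19 (x19 \<cdot> (e \<cdot> (x18 \<cdot> x20)))) = ((dv x19 (x19 \<cdot> (e \<cdot> x20))) \<cdot> (dv x19 (x19 \<cdot> x18)))"
  by (metis aip_f1184 aip_f11)

lemma aip_f1290: "(dv x19 (x19 \<cdot> (e \<cdot> (x18 \<cdot> x20)))) = ((dv x19 (x19 \<cdot> (e \<cdot> x20))) \<cdot> x18)"
  by (metis aip_f1289 ld2)

lemma aip_f1291: "(dv x19 (x19 \<cdot> (e \<cdot> (x18 \<cdot> x20)))) = ((e \<cdot> x20) \<cdot> x18)"
  by (metis aip_f1290 ld2)

lemma aip_f1292: "(x20 \<cdot> x18) = (dv x19 (x19 \<cdot> (e \<cdot> (x18 \<cdot> x20))))"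
  by (metis aip_f1291 lid)

lemma aip_f1293: "(x20 \<cdot> x18) = (dv x19 (x19 \<cdot> (x18 \<cdot> x20)))"
  by (metis aip_f1292 lid)

lemma aip_f1352: "(dv (x16 \<cdot> x17) (x16 \<cdot> (x17 \<cdot> (iv x15)))) = (dv (dv (x16 \<cdot> x17) (x16 \<cdot> (x17 \<cdot> x15))) (dv (x16 \<cdot> x17) (x16 \<cdot> (x17 \<cdot> e))))"
  by (metis aip_f52 aip_f15)

lemma aip_f1416: "(dv (x16 \<cdot> x17) (x16 \<cdot> (x17 \<cdot> (iv x15)))) = (dv (dv (x16 \<cdot> x17) (x16 \<cdot> (x17 \<cdot> x15))) (dv (x16 \<cdot> x17) (x16 \<cdot> x17)))"
  by (metis aip_f1352 aip_f11)

lemma aip_f1417: "(dv (x16 \<cdot> x17) (x16 \<cdot> (x17 \<cdot> (iv x15)))) = (dv (dv (x16 \<cdot> x17) (x16 \<cdot> (x17 \<cdot> x15))) e)"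
  by (metis aip_f1416 aip_f23)

lemma aip_f1418: "(dv (x16 \<cdot> x17) (x16 \<cdot> (x17 \<cdot> (iv x15)))) = (iv (dv (x16 \<cdot> x17) (x16 \<cdot> (x17 \<cdot> x15))))"
  by (metis aip_f1417)

lemma aip_f2321: "(dv (x16 \<cdot> x15) (x14 \<cdot> (x15 \<cdot> x16))) = x14"
  by (metis aip_f111 aip_f1293)

lemma aip_f2989: "(dv (x4 \<cdot> x4) (x4 \<cdot> x4)) = (x4 \<cdot> (dv (x4 \<cdot> x4) x4))"
  by (metis aip_f293 aip_f11)

lemma aip_f2990: "(dv (x5 \<cdot> x5) (x5 \<cdot> x6)) = (x5 \<cdot> (dv (x5 \<cdot> x5) x6))"
  by (metis aip_f293 ld1)

lemma aip_f3053: "e = (x4 \<cdot> (dv (x4 \<cdot> x4) x4))"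
  by (metis aip_f2989 aip_f23)

lemma aip_f4199: "(x11 \<cdot> (dv (x11 \<cdot> x11) (x11 \<cdot> (iv x12)))) = (iv (dv (x11 \<cdot> x11) (x11 \<cdot> (x11 \<cdot> x12))))"
  by (metis aip_f1418 aip_f293)

lemma aip_f4202: "(dv (x4 \<cdot> x5) (x4 \<cdot> (x5 \<cdot> (x7 \<cdot> (iv x6))))) = ((dv (x4 \<cdot> x5) (x4 \<cdot> (x5 \<cdot> x7))) \<cdot> (iv (dv (x4 \<cdot> x5) (x4 \<cdot> (x5 \<cdot> x6)))))"
  by (metis aut_Lxy aip_f1418)

lemma aip_f4270: "(x11 \<cdot> (dv (x11 \<cdot> x11) (x11 \<cdot> (iv x12)))) = (iv (x11 \<cdot> (dv (x11 \<cdot> x11) (x11 \<cdot> x12))))"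
  by (metis aip_f4199 aip_f293)

lemma aip_f4271: "(x11 \<cdot> (dv (x11 \<cdot> x11) (x11 \<cdot> (iv x12)))) = (iv (x11 \<cdot> (x11 \<cdot> (dv (x11 \<cdot> x11) x12))))"
  by (metis aip_f4270 aip_f2990)

lemma aip_f4272: "(iv (x11 \<cdot> (x11 \<cdot> (dv (x11 \<cdot> x11) x12)))) = (x11 \<cdot> (x11 \<cdot> (dv (x11 \<cdot> x11) (iv x12))))"
  by (metis aip_f4271 aip_f2990)

lemma aip_f6487: "(x90 \<cdot> (dv (x90 \<cdot> x90) (x90 \<cdot> (x90 \<cdot> (iv x90))))) = (dv (x90 \<cdot> x90) (x90 \<cdot> (x90 \<cdot> e)))"
  by (metis aip_f119 aip_f297)

lemma aip_f6777: "(x90 \<cdot> (dv (x90 \<cdot> x90) (x90 \<cdot> (x90 \<cdot> (iv x90))))) = (x90 \<cdot> (dv (x90 \<cdot> x90) (x90 \<cdot> e)))"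
  by (metis aip_f6487 aip_f293)

lemma aip_f6778: "(x90 \<cdot> (dv (x90 \<cdot> x90) (x90 \<cdot> (x90 \<cdot> (iv x90))))) = (x90 \<cdot> (x90 \<cdot> (dv (x90 \<cdot> x90) e)))"
  by (metis aip_f6777 aip_f2990)

lemma aip_f6779: "(x90 \<cdot> (dv (x90 \<cdot> x90) (x90 \<cdot> (x90 \<cdot> (iv x90))))) = (x90 \<cdot> (x90 \<cdot> (iv (x90 \<cdot> x90))))"
  by (metis aip_f6778)

lemma aip_f6780: "(x90 \<cdot> (x90 \<cdot> (iv (x90 \<cdot> x90)))) = (x90 \<cdot> (x90 \<cdot> (dv (x90 \<cdot> x90) (x90 \<cdot> (iv x90)))))"
  by (metis aip_f6779 aip_f293)

lemma aip_f6781: "(x90 \<cdot> (x90 \<cdot> (iv (x90 \<cdot> x90)))) = (x90 \<cdot> (x90 \<cdot> (x90 \<cdot> (dv (x90 \<cdot> x90) (iv x90)))))"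
  by (metis aip_f6780 aip_f2990)

lemma aip_f6782: "(x90 \<cdot> (x90 \<cdot> (iv (x90 \<cdot> x90)))) = (x90 \<cdot> (iv (x90 \<cdot> (x90 \<cdot> (dv (x90 \<cdot> x90) x90)))))"
  by (metis aip_f6781 aip_f4272)

lemma aip_f6783: "(x90 \<cdot> (x90 \<cdot> (iv (x90 \<cdot> x90)))) = (x90 \<cdot> (iv (x90 \<cdot> e)))"
  by (metis aip_f6782 aip_f3053)

lemma aip_f6784: "(x90 \<cdot> (iv x90)) = (x90 \<cdot> (x90 \<cdot> (iv (x90 \<cdot> x90))))"
  by (metis aip_f6783 aip_f11)

lemma aip_f6785: "e = (x90 \<cdot> (x90 \<cdot> (iv (x90 \<cdot> x90))))"
  by (metis aip_f6784 aip_f15)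

lemma aip_f12623: "(dv (x74 \<cdot> (iv (x74 \<cdot> x74))) (x74 \<cdot> ((iv (x74 \<cdot> x74)) \<cdot> x74))) = (e \<cdot> (dv (x74 \<cdot> (iv (x74 \<cdot> x74))) e))"
  by (metis aip_f708 aip_f6785)

lemma aip_f12850: "(dv (x74 \<cdot> (iv (x74 \<cdot> x74))) (x74 \<cdot> ((iv (x74 \<cdot> x74)) \<cdot> x74))) = (dv (x74 \<cdot> (iv (x74 \<cdot> x74))) e)"
  by (metis aip_f12623 lid)

lemma aip_f12851: "(dv (x74 \<cdot> (iv (x74 \<cdot> x74))) (x74 \<cdot> ((iv (x74 \<cdot> x74)) \<cdot> x74))) = (iv (x74 \<cdot> (iv (x74 \<cdot> x74))))"
  by (metis aip_f12850)

lemma aip_f12852: "(iv (x74 \<cdot> (iv (x74 \<cdot> x74)))) = x74"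
  by (metis aip_f12851 aip_f2321)

lemma aip_f14382: "(dv (x15 \<cdot> x16) (x15 \<cdot> (x16 \<cdot> x16))) = (iv ((dv (x15 \<cdot> x16) (x15 \<cdot> (x16 \<cdot> x16))) \<cdot> (iv (dv (x15 \<cdot> x16) (x15 \<cdot> (x16 \<cdot> (x16 \<cdot> x16)))))))"
  by (metis aip_f12852 aip_f42)

lemma aip_f14420: "(dv (x15 \<cdot> x16) (x15 \<cdot> (x16 \<cdot> x16))) = (iv (dv (x15 \<cdot> x16) (x15 \<cdot> (x16 \<cdot> (x16 \<cdot> (iv (x16 \<cdot> x16)))))))"
  by (metis aip_f14382 aip_f4202)

lemma aip_f14421: "(dv (x15 \<cdot> x16) (x15 \<cdot> (x16 \<cdot> x16))) = (iv (dv (x15 \<cdot> x16) (x15 \<cdot> e)))"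
  by (metis aip_f14420 aip_f6785)

lemma aip_f14422: "(dv (x15 \<cdot> x16) (x15 \<cdot> (x16 \<cdot> x16))) = (iv (dv (x15 \<cdot> x16) x15))"
  by (metis aip_f14421 aip_f11)

lemma aip_f24982: "((iv (x19 \<cdot> x18)) \<cdot> (dv (x19 \<cdot> x18) (x19 \<cdot> (x18 \<cdot> x18)))) = (dv (x19 \<cdot> x18) (x19 \<cdot> (x18 \<cdot> (iv x19))))"
  by (metis aip_f260 aip_f1136)

lemma aip_f25207: "((iv (x19 \<cdot> x18)) \<cdot> (dv (x19 \<cdot> x18) (x19 \<cdot> (x18 \<cdot> x18)))) = (iv (dv (x19 \<cdot> x18) (x19 \<cdot> (x18 \<cdot> x19))))"
  by (metis aip_f24982 aip_f1418)

lemma aip_f25208: "(iv x19) = ((iv (x19 \<cdot> x18)) \<cdot> (dv (x19 \<cdot> x18) (x19 \<cdot> (x18 \<cdot> x18))))"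
  by (metis aip_f25207 aip_f2321)

lemma aip_f25209: "(iv x19) = ((iv (x19 \<cdot> x18)) \<cdot> (iv (dv (x19 \<cdot> x18) x19)))"
  by (metis aip_f25208 aip_f14422)

lemma aip_f115875: "(iv x31) = ((iv x32) \<cdot> (iv (dv x32 x31)))"
  by (metis aip_f25209 ld1)

lemma aip_f116787: "(iv (x1 \<cdot> x2)) = ((iv x1) \<cdot> (iv x2))"
  by (metis aip_f115875 ld2)

lemma aip: "iv (x \<cdot> y) = iv x \<cdot> iv y"
  by (metis aip_f116787)

lemma ivi: "iv (iv x) = x"
  by (metis ld1 ld2 cm rid)

lemma iv_uniq: "a \<cdot> b = e \<Longrightarrow> b = iv a"
  by (metis ld2)

lemma E_aut: "dv (x \<cdot> y) (x \<cdot> (y \<cdot> z)) = dv (iv x \<cdot> iv y) (iv x \<cdot> (iv y \<cdot> z))"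
proof -
  define w where "w = x \<cdot> y"
  define A where "A t = dv w (x \<cdot> (y \<cdot> t))" for t
  have Ae: "A e = e" unfolding A_def w_def using ld2[of "x \<cdot> y" e] by simp
  have Aiv: "A (iv t) = iv (A t)" for t
  proof -
    have "A t \<cdot> A (iv t) = A (t \<cdot> iv t)" unfolding A_def w_def by (rule aut_Lxy[symmetric])
    also have "t \<cdot> iv t = e" by (rule ld1)
    finally show ?thesis using Ae iv_uniq by simp
  qed
  have S2: "iv (a \<cdot> iv t) = iv a \<cdot> t" for a t
    using aip[of a "iv t"] ivi[of t] by simp
  have S3: "iv (dv a t) = dv (iv a) (iv t)" for a t
  proof -
    have "iv a \<cdot> iv (dv a t) = iv (a \<cdot> dv a t)" by (rule aip[symmetric])
    also have "\<dots> = iv t" by (rule arg_cong[where f=iv], rule ld1)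
    finally show ?thesis using ld2 by metis
  qed
  have "A z = iv (A (iv z))" using Aiv[of z] ivi by simp
  also have "A (iv z) = dv w (x \<cdot> (y \<cdot> iv z))" unfolding A_def ..
  also have "iv \<dots> = dv (iv w) (iv (x \<cdot> (y \<cdot> iv z)))" by (rule S3)
  also have "iv (x \<cdot> (y \<cdot> iv z)) = iv x \<cdot> iv (y \<cdot> iv z)" by (rule aip)
  also have "iv (y \<cdot> iv z) = iv y \<cdot> z" by (rule S2)
  also have "iv w = iv x \<cdot> iv y" unfolding w_def by (rule aip)
  finally show ?thesis unfolding A_def w_def .
qed

lemma l4: "pp (x \<cdot> y) z = x \<cdot> pp y (dv (iv x) z)"
proof -
  define t where "t = dv (iv y) (dv (iv x) z)"
  have "dv (x \<cdot> y) (x \<cdot> (y \<cdot> t)) = dv (iv x \<cdot> iv y) (iv x \<cdot> (iv y \<cdot> t))" by (rule E_aut)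
  also have "iv x \<cdot> (iv y \<cdot> t) = z" unfolding t_def by simp
  also have "iv x \<cdot> iv y = iv (x \<cdot> y)" by (rule aip[symmetric])
  finally have "x \<cdot> (y \<cdot> t) = (x \<cdot> y) \<cdot> dv (iv (x \<cdot> y)) z" by (metis ld1)
  also have "\<dots> = pp (x \<cdot> y) z" by (rule pc)
  finally have 1: "pp (x \<cdot> y) z = x \<cdot> (y \<cdot> t)" ..
  have "y \<cdot> t = pp y (dv (iv x) z)" unfolding t_def by (rule pc)
  with 1 show ?thesis by simp
qed

context
  assumes H: "\<And>x y. pp x (y \<cdot> y) = pp y (x \<cdot> x)"
begin
lemma m_f19: "(x0 \<cdot> (dv (iv x0) x1)) = (pp x0 x1)"
  by (metis pc)

lemma m_f24: "(x0 \<cdot> e) = x0"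
  by (metis cm lid)

lemma m_f33: "e = (x0 \<cdot> (iv x0))"
  by (metis ld1)

lemma m_f34: "(dv e x0) = x0"
  by (metis ld1 lid)

lemma m_f36: "e = (iv e)"
  by (metis m_f34)

lemma m_f43: "(dv x1 (x2 \<cdot> x1)) = x2"
  by (metis ld2 cm)

lemma m_f59: "(dv (iv x8) e) = x8"
  by (metis m_f43 m_f33)

lemma m_f65: "(iv (iv x1)) = x1"
  by (metis m_f59)

lemma m_f115: "(iv x0) = (x0 \<cdot> ((iv x0) \<cdot> (iv x0)))"
  by (metis pa1 m_f65)

lemma m_f120: "(x1 \<cdot> x1) = (dv (iv x1) x1)"
  by (metis ld2 pa1)

lemma m_f122: "(iv x0) = (x0 \<cdot> (iv (x0 \<cdot> x0)))"
  by (metis m_f115 aip)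

lemma m_f193: "(dv e (e \<cdot> x0)) = (pp e x0)"
  by (metis m_f36)

lemma m_f197: "(pp x4 e) = (dv (iv x4) x4)"
  by (metis m_f24)

lemma m_f198: "(pp x5 (dv x5 x6)) = (dv (iv x5) x6)"
  by (metis ld1)

lemma m_f212: "(x5 \<cdot> x6) = ((iv x5) \<cdot> (pp x5 x6))"
  by (metis ld1)

lemma m_f213: "(pp e x0) = x0"
  by (metis m_f193 ld2)

lemma m_f243: "(dv x0 (iv x0)) = (pp (iv x0) e)"
  by (metis m_f197 m_f65)

lemma m_f245: "(x1 \<cdot> x1) = (pp x1 e)"
  by (metis m_f197 m_f120)

lemma m_f268: "(sq (pp x4 e)) = x4"
  by (metis sr2 m_f245)

lemma m_f432: "(iv (x2 \<cdot> x2)) = (dv x2 (iv x2))"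
  by (metis ld2 m_f122)

lemma m_f461: "(iv x6) = (sq (dv x6 (iv x6)))"
  by (metis m_f268 m_f243)

lemma m_f575: "(pp (iv x7) e) = (iv (x7 \<cdot> x7))"
  by (metis aip m_f245)

lemma m_f576: "((iv x9) \<cdot> (iv x8)) = (iv (x8 \<cdot> x9))"
  by (metis aip cm)

lemma m_f589: "(pp (iv x11) (iv x12)) = (dv (iv (iv x11)) (iv (x11 \<cdot> x12)))"
  by (metis aip)

lemma m_f591: "(iv x16) = (dv (iv x15) (iv (x15 \<cdot> x16)))"
  by (metis ld2 aip)

lemma m_f614: "(pp (iv x11) (iv x12)) = (dv x11 (iv (x11 \<cdot> x12)))"
  by (metis m_f589 m_f65)

lemma m_f618: "(pp (iv x0) e) = (iv (pp x0 e))"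
  by (metis m_f575 m_f245)

lemma m_f619: "(pp (iv (iv x3)) e) = (iv (iv (x3 \<cdot> x3)))"
  by (metis m_f575 aip)

lemma m_f620: "(iv x4) = (pp (iv (sq x4)) e)"
  by (metis m_f575 sr1)

lemma m_f668: "(pp (iv (iv x3)) e) = (iv (dv x3 (iv x3)))"
  by (metis m_f619 m_f432)

lemma m_f669: "(pp x3 e) = (iv (dv x3 (iv x3)))"
  by (metis m_f668 m_f65)

lemma m_f735: "(iv (sq x7)) = (sq (iv x7))"
  by (metis m_f268 m_f620)

lemma m_f837: "(iv x8) = (sq (iv (pp x8 e)))"
  by (metis m_f268 m_f618)

lemma m_f1544: "(pp (iv x11) x12) = ((iv x11) \<cdot> (dv x11 x12))"
  by (metis m_f19 m_f65)

lemma m_f1557: "(x11 \<cdot> x12) = (pp x11 (x12 \<cdot> (iv x11)))"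
  by (metis m_f19 m_f43)

lemma m_f1565: "(pp x1 (dv (iv x1) x2)) = (dv (iv x1) (pp x1 x2))"
  by (metis m_f19)

lemma m_f1566: "(dv (dv (iv x3) x4) (pp x3 x4)) = x3"
  by (metis m_f43 m_f19)

lemma m_f1816: "(dv (iv (iv x19)) (x19 \<cdot> x20)) = (pp (iv x19) (pp x19 x20))"
  by (metis m_f198)

lemma m_f1844: "(pp (iv x19) (pp x19 x20)) = (dv x19 (x19 \<cdot> x20))"
  by (metis m_f1816 m_f65)

lemma m_f1845: "(pp (iv x19) (pp x19 x20)) = x20"
  by (metis m_f1844 ld2)

lemma m_f1862: "(pp x11 (pp (iv x11) x12)) = x12"
  by (metis m_f1845 m_f65)

lemma m_f1897: "(pp x8 e) = (pp e (x8 \<cdot> x8))"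
  by (metis H m_f24)

lemma m_f1899: "(pp (iv x10) (x11 \<cdot> x11)) = (pp x11 (iv (x10 \<cdot> x10)))"
  by (metis H aip)

lemma m_f1900: "(pp (sq x12) (x13 \<cdot> x13)) = (pp x13 x12)"
  by (metis H sr1)

lemma m_f1914: "(pp (iv x10) (x11 \<cdot> x11)) = (pp x11 (dv x10 (iv x10)))"
  by (metis m_f1899 m_f432)

lemma m_f1969: "(x3 \<cdot> x3) = (pp (iv e) (pp x3 e))"
  by (metis m_f1845 m_f1897)

lemma m_f1974: "(x3 \<cdot> x3) = (pp e (pp x3 e))"
  by (metis m_f1969 m_f36)

lemma m_f2055: "(pp x8 (iv (pp x7 e))) = (pp (iv x7) (x8 \<cdot> x8))"
  by (metis m_f1900 m_f837)

lemma m_f2057: "(pp x0 x1) = (pp (sq x1) (pp e (pp x0 e)))"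
  by (metis m_f1900 m_f1974)

lemma m_f2068: "(x5 \<cdot> x5) = (pp (iv (sq x4)) (pp x5 x4))"
  by (metis m_f1845 m_f1900)

lemma m_f2069: "(pp x0 x1) = (pp (sq x1) (pp x0 e))"
  by (metis m_f2057 m_f213)

lemma m_f2521: "(iv (x2 \<cdot> x3)) = (iv (x3 \<cdot> x2))"
  by (metis m_f576 aip)

lemma m_f2646: "(iv ((iv x30) \<cdot> (iv x29))) = (iv (iv (x29 \<cdot> x30)))"
  by (metis m_f2521 aip)

lemma m_f2683: "(dv (x43 \<cdot> x44) (iv (x44 \<cdot> x43))) = (pp (iv (x44 \<cdot> x43)) e)"
  by (metis m_f243 m_f2521)

lemma m_f2698: "(pp (x77 \<cdot> x78) e) = (iv (dv (x77 \<cdot> x78) (iv (x78 \<cdot> x77))))"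
  by (metis m_f669 m_f2521)

lemma m_f2743: "(x29 \<cdot> x30) = (iv ((iv x30) \<cdot> (iv x29)))"
  by (metis m_f2646 m_f65)

lemma m_f2744: "(x29 \<cdot> x30) = (iv (iv (x30 \<cdot> x29)))"
  by (metis m_f2743 aip)

lemma m_f2764: "(dv (x43 \<cdot> x44) (iv (x44 \<cdot> x43))) = (iv (pp (x44 \<cdot> x43) e))"
  by (metis m_f2683 m_f618)

lemma m_f2767: "(pp (x77 \<cdot> x78) e) = (iv (iv (pp (x78 \<cdot> x77) e)))"
  by (metis m_f2698 m_f2764)

lemma m_f2791: "((dv (iv x12) x13) \<cdot> x12) = (iv (iv (pp x12 x13)))"
  by (metis m_f2744 m_f19)

lemma m_f2862: "(pp x12 x13) = ((dv (iv x12) x13) \<cdot> x12)"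
  by (metis m_f2791 m_f65)

lemma m_f2933: "(iv (dv x10 x11)) = (dv (iv x10) (iv x11))"
  by (metis m_f591 ld1)

lemma m_f2950: "(iv (pp x32 x33)) = (dv (iv (iv x32)) (iv (x32 \<cdot> x33)))"
  by (metis m_f591 m_f212)

lemma m_f3001: "(iv (pp x32 x33)) = (dv x32 (iv (x32 \<cdot> x33)))"
  by (metis m_f2950 m_f65)

lemma m_f3002: "(pp (iv x11) (iv x12)) = (iv (pp x11 x12))"
  by (metis m_f614 m_f3001)

lemma m_f3630: "(iv x3) = (pp x2 (iv (pp x2 x3)))"
  by (metis m_f1862 m_f3002)

lemma m_f3640: "((iv x14) \<cdot> (iv x15)) = ((iv (iv x14)) \<cdot> (iv (pp x14 x15)))"
  by (metis m_f212 m_f3002)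

lemma m_f3661: "((iv x14) \<cdot> (iv x15)) = (x14 \<cdot> (iv (pp x14 x15)))"
  by (metis m_f3640 m_f65)

lemma m_f3662: "(iv (x14 \<cdot> x15)) = (x14 \<cdot> (iv (pp x14 x15)))"
  by (metis m_f3661 aip)

lemma m_f3951: "(iv x17) = (dv (dv x17 x18) (pp (iv x17) x18))"
  by (metis m_f1566 m_f65)

lemma m_f4202: "(pp (x10 \<cdot> x11) e) = (x10 \<cdot> (pp x11 x10))"
  by (metis l4 m_f59)

lemma m_f4353: "(iv x30) = ((iv x29) \<cdot> (iv (dv x29 x30)))"
  by (metis ld1 m_f2933)

lemma m_f6078: "((dv x4 x5) \<cdot> (iv x4)) = (pp (dv x4 x5) (iv x5))"
  by (metis m_f1557 m_f4353)

lemma m_f6184: "(pp x4 (dv x3 (iv x3))) = (pp (iv x3) (pp x4 e))"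
  by (metis m_f2069 m_f461)

lemma m_f8225: "(pp (iv x32) x33) = ((dv x32 x33) \<cdot> (iv x32))"
  by (metis m_f2862 m_f65)

lemma m_f8285: "(pp (dv x4 x5) (iv x5)) = (pp (iv x4) x5)"
  by (metis m_f6078 m_f8225)

lemma m_f21757: "(pp ((iv (pp x28 x29)) \<cdot> x28) e) = ((iv (pp x28 x29)) \<cdot> (iv x29))"
  by (metis m_f4202 m_f3630)

lemma m_f21856: "(pp x9 x8) = (dv x8 (pp (x8 \<cdot> x9) e))"
  by (metis ld2 m_f4202)

lemma m_f21938: "((iv (pp x28 x29)) \<cdot> (iv x29)) = (pp (x28 \<cdot> (iv (pp x28 x29))) e)"
  by (metis m_f21757 cm)

lemma m_f21939: "((iv (pp x28 x29)) \<cdot> (iv x29)) = (pp (iv (x28 \<cdot> x29)) e)"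
  by (metis m_f21938 m_f3662)

lemma m_f21940: "((iv (pp x28 x29)) \<cdot> (iv x29)) = (iv (pp (x28 \<cdot> x29) e))"
  by (metis m_f21939 m_f618)

lemma m_f31344: "(pp (x0 \<cdot> x0) x1) = (x0 \<cdot> (dv (iv x0) (pp x0 x1)))"
  by (metis l4 m_f1565)

lemma m_f31451: "(pp (x0 \<cdot> x0) x1) = (pp x0 (pp x0 x1))"
  by (metis m_f31344 m_f19)

lemma m_f31570: "(pp x42 x43) = (pp (sq x42) (pp (sq x42) x43))"
  by (metis m_f31451 sr1)

lemma m_f32242: "(pp x12 (pp x13 e)) = (pp (sq x12) (pp x13 x12))"
  by (metis m_f31570 m_f2069)

lemma m_f33712: "((dv x26 x27) \<cdot> (dv x26 x27)) = (pp (iv (sq (iv x27))) (pp (iv x26) x27))"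
  by (metis m_f2068 m_f8285)

lemma m_f33901: "((dv x26 x27) \<cdot> (dv x26 x27)) = (pp (iv (iv (sq x27))) (pp (iv x26) x27))"
  by (metis m_f33712 m_f735)

lemma m_f33902: "((dv x26 x27) \<cdot> (dv x26 x27)) = (pp (sq x27) (pp (iv x26) x27))"
  by (metis m_f33901 m_f65)

lemma m_f33903: "((dv x26 x27) \<cdot> (dv x26 x27)) = (pp x27 (pp (iv x26) e))"
  by (metis m_f33902 m_f32242)

lemma m_f33904: "(pp x27 (iv (pp x26 e))) = ((dv x26 x27) \<cdot> (dv x26 x27))"
  by (metis m_f33903 m_f618)

lemma m_f33905: "(pp x27 (iv (pp x26 e))) = (pp (dv x26 x27) e)"
  by (metis m_f33904 m_f245)

lemma m_f33906: "(pp (iv x7) (x8 \<cdot> x8)) = (pp (dv x7 x8) e)"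
  by (metis m_f2055 m_f33905)

lemma m_f33919: "(pp x11 (dv x10 (iv x10))) = (pp (dv x10 x11) e)"
  by (metis m_f1914 m_f33906)

lemma m_f33938: "(pp (iv x3) (pp x4 e)) = (pp (dv x3 x4) e)"
  by (metis m_f6184 m_f33919)

lemma m_f36038: "(iv x12) = (dv (pp x13 x12) (pp (iv x12) (pp (x12 \<cdot> x13) e)))"
  by (metis m_f3951 m_f21856)

lemma m_f36235: "(iv x12) = (dv (pp x13 x12) (pp (dv x12 (x12 \<cdot> x13)) e))"
  by (metis m_f36038 m_f33938)

lemma m_f36236: "(iv x12) = (dv (pp x13 x12) (pp x13 e))"
  by (metis m_f36235 ld2)

lemma m_f36378: "(pp (iv (pp x10 x11)) (pp x10 e)) = ((iv (pp x10 x11)) \<cdot> (iv x11))"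
  by (metis m_f1544 m_f36236)

lemma m_f36385: "(pp (iv x25) (iv (pp x24 e))) = (pp (iv (pp x24 x25)) (pp x24 e))"
  by (metis m_f8285 m_f36236)

lemma m_f39114: "(iv (pp (x10 \<cdot> x11) e)) = (pp (iv (pp x10 x11)) (pp x10 e))"
  by (metis m_f36378 m_f21940)

lemma m_f39130: "(iv (pp (x24 \<cdot> x25) e)) = (pp (iv x25) (iv (pp x24 e)))"
  by (metis m_f36385 m_f39114)

lemma m_f39131: "(iv (pp (x24 \<cdot> x25) e)) = (iv (pp x25 (pp x24 e)))"
  by (metis m_f39130 m_f3002)

lemma m_f39137: "(pp (x77 \<cdot> x78) e) = (iv (iv (pp x77 (pp x78 e))))"
  by (metis m_f2767 m_f39131)

lemma m_f39206: "(pp (x77 \<cdot> x78) e) = (pp x77 (pp x78 e))"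
  by (metis m_f39137 m_f65)

lemma mainq: "pp x (y \<cdot> y) = (x \<cdot> y) \<cdot> (x \<cdot> y)"
  by (metis m_f245 m_f39206)


end

lemma circ_eq: "circ mult e x y = sq (pp x (y \<cdot> y))"
  unfolding circ_def linv_def ..

lemma main_dir: assumes C: "\<forall>x y. circ mult e x y = circ mult e y x"
  shows "circ mult e x y = x \<cdot> y"
proof -
  have H: "pp x (y \<cdot> y) = pp y (x \<cdot> x)" for x y
  proof -
    have "sq (pp x (y \<cdot> y)) = sq (pp y (x \<cdot> x))" using C circ_eq by metis
    then have "sq (pp x (y \<cdot> y)) \<cdot> sq (pp x (y \<cdot> y)) = sq (pp y (x \<cdot> x)) \<cdot> sq (pp y (x \<cdot> x))" by simp
    then show ?thesis by simp
  qed
  have "pp x (y \<cdot> y) = (x \<cdot> y) \<cdot> (x \<cdot> y)" using mainq[OF H] .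
  then show ?thesis unfolding circ_eq by simp
qed

end

theorem corollary3p11:
  fixes mult :: "'a \<Rightarrow> 'a \<Rightarrow> 'a" and e :: 'a
  assumes "comm_A_loop mult e"
    and "uniquely_2_divisible mult"
  shows "(\<forall>x y. circ mult e x y = circ mult e y x)
     \<longleftrightarrow> (\<exists>f. magma_iso (circ mult e) mult f)"
proof -
  interpret cal mult e using assms by unfold_locales
  show ?thesis
  proof
    assume C: "\<forall>x y. circ mult e x y = circ mult e y x"
    have "magma_iso (circ mult e) mult id"
      unfolding magma_iso_def using main_dir[OF C] by simp
    then show "\<exists>f. magma_iso (circ mult e) mult f" by blast
  next
    assume "\<exists>f. magma_iso (circ mult e) mult f"
    then obtain f where f: "bij f" "\<And>x y. f (circ mult e x y) = mult (f x) (f y)"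
      unfolding magma_iso_def by blast
    show "\<forall>x y. circ mult e x y = circ mult e y x"
    proof (intro allI)
      fix x y
      have "f (circ mult e x y) = f (circ mult e y x)" using f(2) cm by metis
      then show "circ mult e x y = circ mult e y x" using f(1) unfolding bij_def inj_def by blast
    qed
  qed
qed

end
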